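(* For all integers $i\geq 1$, \[ v_3(a_i+1)=\begin{cases} 0, & i\equiv 0,1,2,3,5,6,7 \pmod 8;\\ 1, & i\equiv 4 \text{ or } 12 \pmod{24};\\ v_3(i+4)+1, & i\equiv 20\pmod{24}. \end{cases} \]
   Context: The Narayana sequence $(a_n)_{n\geq 0}$ is defined by $a_0=0$, $a_1=a_2=1$ and $a_n=a_{n-1}+a_{n-3}$ for all $n\geq 3$. For a nonzero integer $x$, $v_3(x)$ denotes the $3$-adic valuation of $x$ (the exponent of the largest power of $3$ dividing $x$). *)

theory Defs
  imports "HOL-Computational_Algebra.Computational_Algebra"
begin

fun narayana :: "nat \<Rightarrow> nat" where
  "narayana 0 = 0"
| "narayana (Suc 0) = 1"
| "narayana (Suc (Suc 0)) = 1"
| "narayana (Suc (Suc (Suc n))) = narayana (Suc (Suc n)) + narayana n"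

definition v3 :: "nat \<Rightarrow> nat" where
  "v3 x = multiplicity (3::nat) x"

end

theory Submission
  imports Defs
begin

datatype tri = T int int int

instantiation tri :: comm_ring_1
begin
definition "0 = T 0 0 0"
definition "1 = T 1 0 0"
fun plus_tri :: "tri \<Rightarrow> tri \<Rightarrow> tri" where
  "plus_tri (T a b c) (T d e f) = T (a+d) (b+e) (c+f)"
fun minus_tri :: "tri \<Rightarrow> tri \<Rightarrow> tri" where
  "minus_tri (T a b c) (T d e f) = T (a-d) (b-e) (c-f)"
fun uminus_tri :: "tri \<Rightarrow> tri" where
  "uminus_tri (T a b c) = T (-a) (-b) (-c)"
fun times_tri :: "tri \<Rightarrow> tri \<Rightarrow> tri" where
  "times_tri (T a0 a1 a2) (T b0 b1 b2) =
     T (a0*b0 + (a1*b2+a2*b1) + a2*b2) (a0*b1+a1*b0 + a2*b2)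
       (a0*b2+a1*b1+a2*b0 + (a1*b2+a2*b1) + a2*b2)"
instance
proof
  fix a b c :: tri
  show "a * b * c = a * (b * c)"
    by (cases a; cases b; cases c) (simp add: algebra_simps)
  show "a * b = b * a"
    by (cases a; cases b) (simp add: algebra_simps)
  show "1 * a = a" by (cases a) (simp add: one_tri_def)
  show "a + b + c = a + (b + c)" by (cases a; cases b; cases c) simp
  show "a + b = b + a" by (cases a; cases b) simp
  show "0 + a = a" by (cases a) (simp add: zero_tri_def)
  show "- a + a = 0" by (cases a) (simp add: zero_tri_def)
  show "a - b = a + - b" by (cases a; cases b) simp
  show "(a + b) * c = a * c + b * c"
    by (cases a; cases b; cases c) (simp add: algebra_simps)
  show "(0::tri) \<noteq> 1" by (simp add: zero_tri_def one_tri_def)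
qed
end

lemma of_nat_tri: "(of_nat n :: tri) = T (int n) 0 0"
  by (induction n) (simp_all add: zero_tri_def one_tri_def)

lemma of_int_tri: "(of_int k :: tri) = T k 0 0"
proof (cases k rule: int_cases)
  case (nonneg n) then show ?thesis by (simp add: of_nat_tri)
next
  case (neg n) then show ?thesis
    by (simp add: of_nat_tri one_tri_def del: of_nat_Suc)
qed

lemma numeral_tri: "(numeral n :: tri) = T (numeral n) 0 0"
  using of_int_tri[of "numeral n"] by simp

fun L :: "tri \<Rightarrow> int" where "L (T a b c) = b + c"

lemma L_add: "L (X + Y) = L X + L Y" by (cases X; cases Y) simp
lemma L_of_int: "L (of_int d * X) = d * L X"
  by (cases X) (simp add: of_int_tri algebra_simps)
lemma L_of_nat: "L (of_nat d * X) = int d * L X"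
  using L_of_int[of "int d"] by simp
lemma L_numeral: "L (numeral d * X) = numeral d * L X"
  using L_of_int[of "numeral d"] by simp

definition xx :: tri where "xx = T 0 1 0"

lemma xx3: "xx ^ 3 = xx^2 + 1"
  by (simp add: xx_def numeral_3_eq_3 power2_eq_square one_tri_def)

lemma xx_rec: "xx ^ Suc (Suc (Suc n)) = xx ^ Suc (Suc n) + xx ^ n"
proof -
  have "xx ^ Suc (Suc (Suc n)) = xx^n * xx^3" by (simp add: numeral_3_eq_3 algebra_simps)
  also have "\<dots> = xx ^ Suc (Suc n) + xx ^ n" by (simp add: xx3 algebra_simps power2_eq_square)
  finally show ?thesis .
qed

lemma L_pow: "L (xx ^ n) = int (narayana n)"
proof (induction n rule: narayana.induct)
  case 4 then show ?case by (simp only: xx_rec L_add narayana.simps of_nat_add)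
qed (simp_all add: xx_def one_tri_def)

definition cc :: tri where "cc = T 208 142 305"

lemma xx24: "xx ^ 24 = 1 + 9 * cc"
proof -
  have a: "xx^4 = T 1 1 1" by (simp add: xx_def numeral_eq_Suc one_tri_def)
  have b: "xx^24 = (xx^4)^6" by (simp flip: power_mult)
  show ?thesis unfolding b a by (simp add: numeral_eq_Suc one_tri_def cc_def numeral_tri)
qed

lemma period: "int (narayana (n + 24)) = int (narayana n) + 9 * L (xx^n * cc)"
  for n :: nat
proof -
  have "xx^(n+24) = xx^n * (1 + 9*cc)" by (simp only: power_add xx24)
  also have "\<dots> = xx^n + 9 * (xx^n * cc)" by (simp add: algebra_simps)
  finally have "L (xx^(n+24)) = L (xx^n) + 9 * L (xx^n * cc)" by (simp add: L_add L_numeral)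
  then show ?thesis by (simp add: L_pow)
qed

lemma period_mod: "narayana n mod 9 = narayana (n mod 24) mod 9"
proof (induction n rule: nat_less_induct)
  case (1 n)
  show ?case
  proof (cases "n < 24")
    case False
    then obtain m where m: "n = m + 24" by (metis add.commute le_add_diff_inverse not_less)
    have "int (narayana n) mod 9 = int (narayana m) mod 9" using period[of m] m by simp
    then have e: "narayana n mod 9 = narayana m mod 9"
      using zmod_int[of "narayana n" 9] zmod_int[of "narayana m" 9] by simp
    have "m < n" using m by simp
    then have "narayana m mod 9 = narayana (m mod 24) mod 9" using "1" by blast
    moreover have "m mod 24 = n mod 24" using m by simp
    ultimately show ?thesis using e by simp
  qed simp
qed

lemma lift0: "\<exists>D. (1 + 9 * c :: tri)^r = 1 + 9 * (of_nat r * c + 3 * D)"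
proof (induction r)
  case 0 show ?case by (rule exI[of _ 0]) simp
next
  case (Suc r)
  then obtain D where D: "(1 + 9 * c :: tri)^r = 1 + 9 * (of_nat r * c + 3 * D)" by blast
  have "(1 + 9 * c :: tri)^Suc r = (1 + 9 * (of_nat r * c + 3 * D)) * (1 + 9 * c)"
    by (simp only: power_Suc2 D)
  also have "\<dots> = 1 + 9 * (of_nat (Suc r) * c + 3 * (D + 3 * (of_nat r * c + 3 * D) * c))"
    by (simp add: algebra_simps)
  finally show ?case by blast
qed

lemma lift: "\<exists>D. (1 + 9 * c :: tri)^(3^k * r) = 1 + 3^(k+2) * (of_nat r * c + 3 * D)"
proof (induction k arbitrary: r)
  case 0 then show ?case using lift0[of c r] by simp
next
  case (Suc k)
  then obtain D where D: "(1 + 9 * c :: tri)^(3^k * r) = 1 + 3^(k+2) * (of_nat r * c + 3 * D)" by blast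
  define E where "E = of_nat r * c + 3 * D"
  define t where "t = (3::tri)^k"
  define F where "F = 3 * t * E^2 + 9 * t^2 * E^3"
  have f1: "1 + 27 * t * E + 243 * t^2 * E^2 + 729 * t^3 * E^3 = 1 + 27 * t * (E + 3 * F)"
    by (simp add: F_def algebra_simps power2_eq_square power3_eq_cube)
  have f2: "E + 3 * F = of_nat r * c + 3 * (D + F)" by (simp add: E_def algebra_simps)
  have f3: "27 * t = (3::tri)^(Suc k + 2)" by (simp add: t_def power_add)
  have "(1 + 9 * c :: tri)^(3^Suc k * r) = ((1 + 9 * c :: tri)^(3^k * r))^3"
    by (simp flip: power_mult add: algebra_simps)
  also have "\<dots> = (1 + 9 * t * E)^3" by (simp add: D E_def t_def power_add)
  also have "\<dots> = 1 + 27 * t * E + 243 * t^2 * E^2 + 729 * t^3 * E^3"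
    by (simp add: algebra_simps power2_eq_square power3_eq_cube)
  also have "\<dots> = 1 + 27 * t * (E + 3 * F)" by (rule f1)
  also have "\<dots> = 1 + 3^(Suc k + 2) * (of_nat r * c + 3 * (D + F))"
    by (simp only: f2 f3)
  finally show ?case by blast
qed

lemma nar3: "narayana (n+3) = narayana (n+2) + narayana n"
  by (simp add: numeral_3_eq_3)

lemma n0: "narayana 0 = 0" by simp

lemma n1: "narayana 1 = 1" by simp

lemma n2: "narayana 2 = 1" by (simp add: numeral_2_eq_2)

lemma n3: "narayana 3 = 1" using nar3[of 0] n2 n0 by simp

lemma n4: "narayana 4 = 2" using nar3[of 1] n3 n1 by simp

lemma n5: "narayana 5 = 3" using nar3[of 2] n4 n2 by simp

lemma n6: "narayana 6 = 4" using nar3[of 3] n5 n3 by simp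

lemma n7: "narayana 7 = 6" using nar3[of 4] n6 n4 by simp

lemma n8: "narayana 8 = 9" using nar3[of 5] n7 n5 by simp

lemma n9: "narayana 9 = 13" using nar3[of 6] n8 n6 by simp

lemma n10: "narayana 10 = 19" using nar3[of 7] n9 n7 by simp

lemma n11: "narayana 11 = 28" using nar3[of 8] n10 n8 by simp

lemma n12: "narayana 12 = 41" using nar3[of 9] n11 n9 by simp

lemma n13: "narayana 13 = 60" using nar3[of 10] n12 n10 by simp

lemma n14: "narayana 14 = 88" using nar3[of 11] n13 n11 by simp

lemma n15: "narayana 15 = 129" using nar3[of 12] n14 n12 by simp

lemma n16: "narayana 16 = 189" using nar3[of 13] n15 n13 by simp

lemma n17: "narayana 17 = 277" using nar3[of 14] n16 n14 by simp

lemma n18: "narayana 18 = 406" using nar3[of 15] n17 n15 by simp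

lemma n19: "narayana 19 = 595" using nar3[of 16] n18 n16 by simp

lemma n20: "narayana 20 = 872" using nar3[of 17] n19 n17 by simp

lemma n21: "narayana 21 = 1278" using nar3[of 18] n20 n18 by simp

lemma n22: "narayana 22 = 1873" using nar3[of 19] n21 n19 by simp

lemma n23: "narayana 23 = 2745" using nar3[of 20] n22 n20 by simp

lemma s24: "s < 24 \<Longrightarrow> s = 0 \<or> s = 1 \<or> s = 2 \<or> s = 3 \<or> s = 4 \<or> s = 5 \<or> s = 6 \<or> s = 7 \<or> s = 8 \<or> s = 9 \<or> s = 10 \<or> s = 11 \<or> s = 12 \<or> s = 13 \<or> s = 14 \<or> s = 15 \<or> s = 16 \<or> s = 17 \<or> s = 18 \<or> s = 19 \<or> s = 20 \<or> s = 21 \<or> s = 22 \<or> s = 23" for s :: nat by presburger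

lemma tab1: "s < 24 \<Longrightarrow> s mod 8 \<in> {0,1,2,3,5,6,7} \<Longrightarrow> \<not> 3 dvd (narayana s + 1)"
  by (drule s24) (elim disjE; simp add: n0 n1 n2 n3 n4 n5 n6 n7 n8 n9 n10 n11 n12 n13 n14 n15 n16 n17 n18 n19 n20 n21 n22 n23; presburger)

lemma tab2: "s \<in> {4,12} \<Longrightarrow> 3 dvd (narayana s + 1) \<and> \<not> 9 dvd (narayana s + 1)"
  by (auto simp add: n4 n12)

definition ww :: tri where "ww = T 1 (-2) 1"

lemma ww_xx4: "ww * xx^4 = 1"
  by (simp add: ww_def xx_def numeral_eq_Suc one_tri_def)

lemma L_pow3: "L ((3::tri)^j * X) = 3^j * L X"
proof -
  have h: "(3::tri)^j = of_int (3^j)" by simp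
  show ?thesis unfolding h by (rule L_of_int)
qed

lemma L_sub: "L (X - Y) = L X - L Y" by (cases X; cases Y) simp

lemma case3:
  fixes i :: nat
  assumes "i mod 24 = 20"
  shows "v3 (narayana i + 1) = v3 (i + 4) + 1"
proof -
  define m where "m = i div 24 + 1"
  have "i = 24 * (i div 24) + i mod 24" by simp
  then have "i + 4 = 24 * (i div 24) + 24" using assms by linarith
  then have im: "i + 4 = 24 * m" unfolding m_def by simp
  have m0: "m \<noteq> 0" by (simp add: m_def)
  have u3: "\<not> is_unit (3::nat)" by simp
  obtain r where r: "m = 3 ^ multiplicity 3 m * r" "\<not> 3 dvd r"
    using multiplicity_decompose'[where x=m and p=3] m0 u3 by blast
  define k where "k = multiplicity 3 m"
  have mk: "m = 3^k * r" using r k_def by simp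
  have "i + 4 = 3^(k+1) * (8 * r)" using im mk by simp
  moreover have "\<not> 3 dvd 8 * r" using r(2) by presburger
  ultimately have v1: "v3 (i + 4) = k + 1" unfolding v3_def
    by (intro multiplicity_decomposeI) auto
  obtain D where D: "(1 + 9 * cc :: tri)^(3^k * r) = 1 + 3^(k+2) * (of_nat r * cc + 3 * D)"
    using lift by blast
  have "xx^(i+4) = (xx^24)^(3^k * r)" by (simp add: im mk power_mult)
  also have "\<dots> = 1 + 3^(k+2) * (of_nat r * cc + 3 * D)" by (simp add: xx24 D)
  finally have e1: "xx^(i+4) = 1 + 3^(k+2) * (of_nat r * cc + 3 * D)" .
  have "ww * xx^(i+4) = xx^i * (ww * xx^4)" by (simp add: power_add algebra_simps)
  then have "xx^i = ww * xx^(i+4)" by (simp add: ww_xx4)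
  also have "\<dots> = ww + 3^(k+2) * (of_nat r * (ww * cc) + 3 * (ww * D))"
    by (simp add: e1 algebra_simps)
  finally have "L (xx^i) = L ww + 3^(k+2) * (int r * L (ww * cc) + 3 * L (ww * D))"
    by (simp only: L_add L_pow3 L_of_nat L_numeral)
  moreover have "L ww = -1" by (simp add: ww_def)
  moreover have "L (ww * cc) = 97" by (simp add: ww_def cc_def)
  ultimately have e2: "int (narayana i) + 1 = 3^(k+2) * (int r * 97 + 3 * L (ww * D))"
    by (simp add: L_pow)
  define Q where "Q = int r * 97 + 3 * L (ww * D)"
  have nq: "\<not> 3 dvd Q" unfolding Q_def using r(2) by presburger
  have "Q > 0"
  proof -
    have "0 < int (narayana i) + 1" by simp
    then have "0 < (3::int)^(k+2) * Q" using e2 Q_def by simp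
    then show ?thesis by (simp add: zero_less_mult_iff)
  qed
  have "int (narayana i + 1) = int (3^(k+2) * nat Q)" using e2 Q_def \<open>Q > 0\<close> by simp
  then have e3: "narayana i + 1 = 3^(k+2) * nat Q" by (simp only: of_nat_eq_iff)
  have iq: "int (nat Q) = Q" using \<open>Q > 0\<close> by simp
  have "\<not> 3 dvd nat Q" using nq iq int_dvd_int_iff[of 3 "nat Q"] by simp
  then have "v3 (narayana i + 1) = k + 2" unfolding v3_def
    by (intro multiplicity_decomposeI[OF e3]) auto
  then show ?thesis using v1 by simp
qed

theorem theorem3p6:
  fixes i :: nat
  assumes "i \<ge> 1"
  shows "(i mod 8 \<in> {0,1,2,3,5,6,7} \<longrightarrow> v3 (narayana i + 1) = 0)
       \<and> (i mod 24 \<in> {4,12} \<longrightarrow> v3 (narayana i + 1) = 1)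
       \<and> (i mod 24 = 20 \<longrightarrow> v3 (narayana i + 1) = v3 (i + 4) + 1)"
proof (intro conjI impI)
  define s where "s = i mod 24"
  have s24: "s < 24" unfolding s_def by simp
  have pm: "narayana i mod 9 = narayana s mod 9" unfolding s_def by (rule period_mod)
  have d3: "3 dvd (narayana i + 1) \<longleftrightarrow> 3 dvd (narayana s + 1)" using pm by presburger
  have d9: "9 dvd (narayana i + 1) \<longleftrightarrow> 9 dvd (narayana s + 1)" using pm by presburger
  {
    assume "i mod 8 \<in> {0,1,2,3,5,6,7}"
    moreover have "s mod 8 = i mod 8" unfolding s_def by (rule mod_mod_cancel) simp
    ultimately have "\<not> 3 dvd (narayana s + 1)" using tab1 s24 by simp
    then show "v3 (narayana i + 1) = 0" unfolding v3_def using d3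
      by (intro not_dvd_imp_multiplicity_0) simp
  }
  {
    assume "i mod 24 \<in> {4,12}"
    then have "3 dvd (narayana s + 1) \<and> \<not> 9 dvd (narayana s + 1)" using tab2 s_def by simp
    then show "v3 (narayana i + 1) = 1" unfolding v3_def using d3 d9
      by (intro multiplicity_eqI) auto
  }
  {
    assume "i mod 24 = 20"
    then show "v3 (narayana i + 1) = v3 (i + 4) + 1" by (rule case3)
  }
qed

end
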